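(* Let $\Gamma$ be a reduct of $(\mathbb{Z};<)$ in which $\mathrm{suc}$ is primitive positive definable. Then $<$ is primitive positive definable in $\Gamma$ if and only if some one-sided infinite binary relation is primitive positive definable in $\Gamma$.
   Context: A reduct of $(\mathbb{Z};<)$ is a relational structure with domain $\mathbb{Z}$ whose relations are first-order definable in $(\mathbb{Z};<)$. $\mathrm{suc}=\{(x,y)\in\mathbb{Z}^2:y=x+1\}$. A binary relation $R$ first-order definable in $(\mathbb{Z};<)$ is one-sided infinite if there exist integers $c\le d$ such that for all $x\in\mathbb{Z}$: $(x,x+z)\notin R$ for every $z<c$, and $(x,x+z)\in R$ for every $z\ge d$. *)

theory Defs
  imports Main
begin

text \<open>Relations on the integers are represented as sets of integer lists
(tuples); an n-ary relation is a set of lists of length n. A relational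
structure with domain the integers is given by its set of relations.\<close>

type_synonym zrel = "int list set"

datatype fo = FLt nat nat | FEq nat nat | FNot fo | FAnd fo fo | FEx nat fo

fun fo_sat :: "fo \<Rightarrow> (nat \<Rightarrow> int) \<Rightarrow> bool" where
  "fo_sat (FLt i j) a = (a i < a j)"
| "fo_sat (FEq i j) a = (a i = a j)"
| "fo_sat (FNot \<phi>) a = (\<not> fo_sat \<phi> a)"
| "fo_sat (FAnd \<phi> \<psi>) a = (fo_sat \<phi> a \<and> fo_sat \<psi> a)"
| "fo_sat (FEx x \<phi>) a = (\<exists>v. fo_sat \<phi> (a(x := v)))"

fun fo_fv :: "fo \<Rightarrow> nat set" where
  "fo_fv (FLt i j) = {i, j}"
| "fo_fv (FEq i j) = {i, j}"
| "fo_fv (FNot \<phi>) = fo_fv \<phi>"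
| "fo_fv (FAnd \<phi> \<psi>) = fo_fv \<phi> \<union> fo_fv \<psi>"
| "fo_fv (FEx x \<phi>) = fo_fv \<phi> - {x}"

definition fo_definable :: "nat \<Rightarrow> zrel \<Rightarrow> bool" where
  "fo_definable n R \<longleftrightarrow> (\<exists>\<phi>. fo_fv \<phi> \<subseteq> {..<n} \<and>
     R = {xs. length xs = n \<and> fo_sat \<phi> (\<lambda>i. if i < n then xs ! i else 0)})"

definition reduct_Z_lt :: "zrel set \<Rightarrow> bool" where
  "reduct_Z_lt \<Gamma> \<longleftrightarrow> (\<forall>R\<in>\<Gamma>. \<exists>n. fo_definable n R)"

datatype pp = PTrue | PEq nat nat | PRel zrel "nat list" | PAnd pp pp | PEx nat pp

fun pp_sat :: "pp \<Rightarrow> (nat \<Rightarrow> int) \<Rightarrow> bool" where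
  "pp_sat PTrue a = True"
| "pp_sat (PEq i j) a = (a i = a j)"
| "pp_sat (PRel R vs) a = (map a vs \<in> R)"
| "pp_sat (PAnd \<phi> \<psi>) a = (pp_sat \<phi> a \<and> pp_sat \<psi> a)"
| "pp_sat (PEx x \<phi>) a = (\<exists>v. pp_sat \<phi> (a(x := v)))"

fun pp_fv :: "pp \<Rightarrow> nat set" where
  "pp_fv PTrue = {}"
| "pp_fv (PEq i j) = {i, j}"
| "pp_fv (PRel R vs) = set vs"
| "pp_fv (PAnd \<phi> \<psi>) = pp_fv \<phi> \<union> pp_fv \<psi>"
| "pp_fv (PEx x \<phi>) = pp_fv \<phi> - {x}"

fun pp_rels :: "pp \<Rightarrow> zrel set" where
  "pp_rels PTrue = {}"
| "pp_rels (PEq i j) = {}"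
| "pp_rels (PRel R vs) = {R}"
| "pp_rels (PAnd \<phi> \<psi>) = pp_rels \<phi> \<union> pp_rels \<psi>"
| "pp_rels (PEx x \<phi>) = pp_rels \<phi>"

definition pp_definable :: "zrel set \<Rightarrow> nat \<Rightarrow> zrel \<Rightarrow> bool" where
  "pp_definable \<Gamma> n R \<longleftrightarrow> (\<exists>\<phi>. pp_rels \<phi> \<subseteq> \<Gamma> \<and> pp_fv \<phi> \<subseteq> {..<n} \<and>
     R = {xs. length xs = n \<and> pp_sat \<phi> (\<lambda>i. if i < n then xs ! i else 0)})"

definition suc_rel :: zrel where
  "suc_rel = {[x, x + 1] | x. True}"

definition lt_rel :: zrel where
  "lt_rel = {[x, y] | x y. x < y}"

definition one_sided_infinite :: "zrel \<Rightarrow> bool" where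
  "one_sided_infinite R \<longleftrightarrow> fo_definable 2 R \<and>
     (\<exists>c d :: int. c \<le> d \<and> (\<forall>x. (\<forall>z. z < c \<longrightarrow> [x, x + z] \<notin> R) \<and>
                                  (\<forall>z. z \<ge> d \<longrightarrow> [x, x + z] \<in> R)))"

end

theory Submission
  imports Defs
begin

lemma pp_agree: "(\<forall>i\<in>pp_fv \<phi>. a i = b i) \<Longrightarrow> pp_sat \<phi> a = pp_sat \<phi> b"
proof (induction \<phi> arbitrary: a b)
  case (PRel R vs)
  then have "map a vs = map b vs" by (intro map_cong) auto
  then show ?case by (simp only: pp_sat.simps)
next
  case (PEx x \<phi>)
  have "\<And>v. pp_sat \<phi> (a(x:=v)) = pp_sat \<phi> (b(x:=v))"
    using PEx.IH PEx.prems by simp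
  then show ?case by simp
next
  case (PAnd p q)
  have "pp_sat p a = pp_sat p b" "pp_sat q a = pp_sat q b" using PAnd by simp_all
  then show ?case by simp
qed auto

lemma fo_agree: "(\<forall>i\<in>fo_fv \<phi>. a i = b i) \<Longrightarrow> fo_sat \<phi> a = fo_sat \<phi> b"
proof (induction \<phi> arbitrary: a b)
  case (FEx x \<phi>)
  have "\<And>v. fo_sat \<phi> (a(x:=v)) = fo_sat \<phi> (b(x:=v))"
    using FEx.IH FEx.prems by simp
  then show ?case by simp
next
  case (FAnd p q)
  have "fo_sat p a = fo_sat p b" "fo_sat q a = fo_sat q b" using FAnd by simp_all
  then show ?case by simp
qed auto

lemma fo_shift: "fo_sat \<phi> (\<lambda>i. a i + t) = fo_sat \<phi> a"
proof (induction \<phi> arbitrary: a)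
  case (FEx x \<phi>)
  have "\<And>v. (\<lambda>i. a i + t)(x := v) = (\<lambda>i. (a(x := v - t)) i + t)" by auto
  then have "(\<exists>v. fo_sat \<phi> ((\<lambda>i. a i + t)(x := v))) = (\<exists>v. fo_sat \<phi> (\<lambda>i. (a(x := v - t)) i + t))"
    by presburger
  also have "\<dots> = (\<exists>v. fo_sat \<phi> (a(x := v - t)))"
    by (simp only: FEx.IH)
  also have "\<dots> = (\<exists>v. fo_sat \<phi> (a(x := v)))"
  proof
    assume "\<exists>v. fo_sat \<phi> (a(x := v - t))"
    then obtain v where "fo_sat \<phi> (a(x := v - t))" by blast
    then show "\<exists>v. fo_sat \<phi> (a(x := v))" by blast
  next
    assume "\<exists>v. fo_sat \<phi> (a(x := v))"
    then obtain v where "fo_sat \<phi> (a(x := v))" by blast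
    then have "fo_sat \<phi> (a(x := (v + t) - t))" by simp
    then show "\<exists>v. fo_sat \<phi> (a(x := v - t))" by blast
  qed
  finally show ?case by simp
qed auto

fun ren :: "(nat \<Rightarrow> nat) \<Rightarrow> pp \<Rightarrow> pp" where
  "ren f PTrue = PTrue"
| "ren f (PEq i j) = PEq (f i) (f j)"
| "ren f (PRel R vs) = PRel R (map f vs)"
| "ren f (PAnd p q) = PAnd (ren f p) (ren f q)"
| "ren f (PEx x p) = PEx (f x) (ren f p)"

lemma ren_sat: "inj f \<Longrightarrow> pp_sat (ren f \<phi>) a = pp_sat \<phi> (a \<circ> f)"
proof (induction \<phi> arbitrary: a)
  case (PEx x \<phi>)
  have "\<And>v. (a(f x := v)) \<circ> f = (a \<circ> f)(x := v)"
    using PEx.prems by (auto simp: inj_eq)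
  then show ?case by (simp only: ren.simps pp_sat.simps PEx.IH[OF PEx.prems])
qed auto

lemma ren_rels: "pp_rels (ren f \<phi>) = pp_rels \<phi>"
  by (induction \<phi>) auto

lemma ren_fv: "inj f \<Longrightarrow> pp_fv (ren f \<phi>) = f ` pp_fv \<phi>"
  by (induction \<phi>) (auto simp: image_Un image_set_diff)

definition sw :: "nat \<Rightarrow> nat \<Rightarrow> nat \<Rightarrow> nat" where
  "sw p q i = (if i = p then q else if i = q then p else i)"

lemma sw_inj: "inj (sw p q)"
  unfolding inj_def sw_def by auto

definition DD :: "zrel set \<Rightarrow> (int \<Rightarrow> int \<Rightarrow> bool) \<Rightarrow> bool" where
  "DD \<Gamma> P \<longleftrightarrow> (\<exists>\<phi>. pp_rels \<phi> \<subseteq> \<Gamma> \<and> pp_fv \<phi> \<subseteq> {0,1} \<and> (\<forall>a. pp_sat \<phi> a = P (a 0) (a 1)))"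

lemma DD_conj: "DD \<Gamma> P \<Longrightarrow> DD \<Gamma> Q \<Longrightarrow> DD \<Gamma> (\<lambda>x y. P x y \<and> Q x y)"
  unfolding DD_def
  apply (elim exE conjE)
  subgoal for p q
    by (rule exI[of _ "PAnd p q"]) auto
  done

lemma DD_conv: "DD \<Gamma> P \<Longrightarrow> DD \<Gamma> (\<lambda>x y. P y x)"
  unfolding DD_def
  apply (elim exE conjE)
  subgoal for p
    apply (rule exI[of _ "ren (sw 0 1) p"])
    using sw_inj[of 0 1] by (auto simp: ren_sat ren_rels ren_fv sw_def)
  done

lemma DD_comp: "DD \<Gamma> P \<Longrightarrow> DD \<Gamma> Q \<Longrightarrow> DD \<Gamma> (\<lambda>x z. \<exists>y. P x y \<and> Q y z)"
  unfolding DD_def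
  apply (elim exE conjE)
  subgoal for p q
    apply (rule exI[of _ "PEx 2 (PAnd (ren (sw 1 2) p) (ren (sw 0 2) q))"])
    using sw_inj[of 1 2] sw_inj[of 0 2] by (auto simp: ren_sat ren_rels ren_fv sw_def)
  done

lemma DD_eq: "DD \<Gamma> (\<lambda>x y. y = x)"
  unfolding DD_def by (rule exI[of _ "PEq 1 0"]) auto

lemma DD_from: "pp_definable \<Gamma> 2 R \<Longrightarrow> DD \<Gamma> (\<lambda>x y. [x,y] \<in> R)"
  unfolding DD_def pp_definable_def
  apply (elim exE conjE)
  subgoal for p
    apply (rule exI[of _ p])
    apply (intro conjI)
      apply simp
     apply auto[1]
    apply (intro allI)
    apply simp
    apply (rule pp_agree)
    apply (auto simp: less_Suc_eq numeral_2_eq_2)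
    done
  done

lemma DD_to: "DD \<Gamma> P \<Longrightarrow> pp_definable \<Gamma> 2 {[x,y] | x y. P x y}"
  unfolding DD_def pp_definable_def
  apply (elim exE conjE)
  subgoal for p
    apply (rule exI[of _ p])
    apply (intro conjI)
      apply simp
     apply auto[1]
    apply (rule set_eqI)
    apply (case_tac x)
     apply simp
    subgoal for xs a l
      apply (cases l)
       apply simp
      apply (case_tac list)
       apply simp_all
      done
    done
  done

lemma DD_cong: "DD \<Gamma> P \<Longrightarrow> (\<And>x y. P x y = Q x y) \<Longrightarrow> DD \<Gamma> Q"
proof -
  assume "DD \<Gamma> P" "\<And>x y. P x y = Q x y"
  moreover have "P = Q" using calculation(2) by (intro ext) auto
  ultimately show ?thesis by simp
qed

lemma DD_shift_nat:
  assumes "pp_definable \<Gamma> 2 suc_rel"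
  shows "DD \<Gamma> (\<lambda>x y. y = x + int n)"
proof (induction n)
  case 0
  then show ?case using DD_eq by simp
next
  case (Suc n)
  have s: "DD \<Gamma> (\<lambda>x y. [x,y] \<in> suc_rel)" using DD_from[OF assms] .
  have "DD \<Gamma> (\<lambda>x z. \<exists>y. y = x + int n \<and> [y,z] \<in> suc_rel)" by (rule DD_comp[OF Suc s])
  then show ?case by (rule DD_cong) (auto simp: suc_rel_def)
qed

lemma DD_shift:
  assumes "pp_definable \<Gamma> 2 suc_rel"
  shows "DD \<Gamma> (\<lambda>x y. y = x + k)"
proof (cases "k \<ge> 0")
  case True
  then show ?thesis using DD_shift_nat[OF assms, of "nat k"] by simp
next
  case False
  have "DD \<Gamma> (\<lambda>x y. x = y + int (nat (-k)))" using DD_conv[OF DD_shift_nat[OF assms, of "nat (-k)"]] .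
  then show ?thesis by (rule DD_cong) (use False in auto)
qed

lemma DD_all: "(\<And>j. DD \<Gamma> (Q j)) \<Longrightarrow> DD \<Gamma> (\<lambda>x y. \<forall>j\<le>(k::nat). Q j x y)"
proof (induction k)
  case 0
  then show ?case by (rule DD_cong) auto
next
  case (Suc k)
  have "DD \<Gamma> (\<lambda>x y. (\<forall>j\<le>k. Q j x y) \<and> Q (Suc k) x y)"
    by (rule DD_conj[OF Suc.IH[OF Suc.prems] Suc.prems])
  then show ?case by (rule DD_cong) (auto simp: le_Suc_eq)
qed

lemma fo_inv:
  assumes "fo_definable 2 R"
  shows "[x,y] \<in> R \<longleftrightarrow> [0, y - x] \<in> R"
proof -
  obtain \<psi> where fv: "fo_fv \<psi> \<subseteq> {..<2}" and R: "R = {xs. length xs = 2 \<and> fo_sat \<psi> (\<lambda>i. if i < 2 then xs ! i else 0)}"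
    using assms unfolding fo_definable_def by blast
  have "fo_sat \<psi> (\<lambda>i. if i < 2 then [0, y - x] ! i else 0)
      = fo_sat \<psi> (\<lambda>i. (if i < 2 then [0, y - x] ! i else 0) + x)"
    by (rule fo_shift[symmetric])
  also have "\<dots> = fo_sat \<psi> (\<lambda>i. if i < 2 then [x, y] ! i else 0)"
    by (rule fo_agree) (use fv in \<open>auto simp: less_Suc_eq numeral_2_eq_2\<close>)
  finally show ?thesis unfolding R by simp
qed

lemma DD_lt_from_R:
  assumes suc: "pp_definable \<Gamma> 2 suc_rel" and osi: "one_sided_infinite R" and Rd: "pp_definable \<Gamma> 2 R"
  shows "DD \<Gamma> (\<lambda>x y. x < y)"
proof -
  obtain c d :: int where cd: "c \<le> d" and H: "\<And>x. (\<forall>z. z < c \<longrightarrow> [x, x + z] \<notin> R) \<and> (\<forall>z. z \<ge> d \<longrightarrow> [x, x + z] \<in> R)"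
    using osi unfolding one_sided_infinite_def by blast
  have fod: "fo_definable 2 R" using osi unfolding one_sided_infinite_def by blast
  define S where "S z = ([0, z] \<in> R)" for z
  have inv: "[x,y] \<in> R \<longleftrightarrow> S (y - x)" for x y unfolding S_def using fo_inv[OF fod] .
  have Slow: "z < c \<Longrightarrow> \<not> S z" for z using H[of 0] unfolding S_def by simp
  have Shigh: "z \<ge> d \<Longrightarrow> S z" for z using H[of 0] unfolding S_def by simp
  define n0 where "n0 = (LEAST n::nat. \<forall>z \<ge> c + int n. S z)"
  have ex: "\<forall>z \<ge> c + int (nat (d - c)). S z" using Shigh cd by simp
  have n0: "\<forall>z \<ge> c + int n0. S z" unfolding n0_def by (rule LeastI[where P="\<lambda>n. \<forall>z \<ge> c + int n. S z", OF ex])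
  define g where "g = c + int n0"
  have gm1: "n0 > 0 \<Longrightarrow> \<not> S (g - 1)"
  proof
    assume "n0 > 0" "S (g - 1)"
    have "\<forall>z \<ge> c + int (n0 - 1). S z"
    proof (intro allI impI)
      fix z assume z: "z \<ge> c + int (n0 - 1)"
      have "int (n0 - 1) = int n0 - 1" using \<open>n0 > 0\<close> by simp
      then have "z \<ge> g - 1" using z unfolding g_def by simp
      then consider "z = g - 1" | "z \<ge> c + int n0" unfolding g_def by linarith
      then show "S z" using \<open>S (g - 1)\<close> n0 by cases auto
    qed
    then have "n0 \<le> n0 - 1" unfolding n0_def by (rule Least_le)
    with \<open>n0 > 0\<close> show False by simp
  qed
  have claim: "(\<forall>j\<le>n0. S (z - int j)) \<longleftrightarrow> z \<ge> g + int n0" for z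
  proof
    assume z: "z \<ge> g + int n0"
    show "\<forall>j\<le>n0. S (z - int j)"
    proof (intro allI impI)
      fix j assume "j \<le> n0"
      then show "S (z - int j)" using n0 z unfolding g_def by simp
    qed
  next
    assume A: "\<forall>j\<le>n0. S (z - int j)"
    show "z \<ge> g + int n0"
    proof (rule ccontr)
      assume zl: "\<not> z \<ge> g + int n0"
      have "S (z - int n0)" using A by simp
      then have "z - int n0 \<ge> c" using Slow by force
      then have zg: "z \<ge> g" unfolding g_def by simp
      define j where "j = nat (z - g + 1)"
      have j1: "int j = z - g + 1" unfolding j_def using zg by simp
      have "j \<le> n0" using j1 zl by simp
      then have "S (z - int j)" using A by simp
      moreover have "z - int j = g - 1" using j1 by simp
      moreover have "n0 > 0" using zg zl by simp
      ultimately show False using gm1 by simp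
    qed
  qed
  define t where "t = g + int n0 - 1"
  have Q: "DD \<Gamma> (\<lambda>x y. [x, y + (t - int j)] \<in> R)" for j
  proof -
    have "DD \<Gamma> (\<lambda>x z. \<exists>w. [x,w] \<in> R \<and> z = w + (- (t - int j)))"
      by (rule DD_comp[OF DD_from[OF Rd] DD_shift[OF suc]])
    then show ?thesis by (rule DD_cong) auto
  qed
  have "DD \<Gamma> (\<lambda>x y. \<forall>j\<le>n0. [x, y + (t - int j)] \<in> R)" by (rule DD_all[OF Q])
  then show ?thesis
  proof (rule DD_cong)
    fix x y
    have "(\<forall>j\<le>n0. [x, y + (t - int j)] \<in> R) = (\<forall>j\<le>n0. S ((y - x + t) - int j))"
      using inv by (simp add: algebra_simps)
    also have "\<dots> = (y - x + t \<ge> g + int n0)" by (rule claim)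
    also have "\<dots> = (x < y)" unfolding t_def by linarith
    finally show "(\<forall>j\<le>n0. [x, y + (t - int j)] \<in> R) = (x < y)" .
  qed
qed

theorem mainTheorem13:
  fixes \<Gamma> :: "zrel set"
  assumes "reduct_Z_lt \<Gamma>"
    and "pp_definable \<Gamma> 2 suc_rel"
  shows "pp_definable \<Gamma> 2 lt_rel \<longleftrightarrow> (\<exists>R. one_sided_infinite R \<and> pp_definable \<Gamma> 2 R)"
proof
  assume L: "pp_definable \<Gamma> 2 lt_rel"
  have "fo_definable 2 lt_rel"
    unfolding fo_definable_def
  proof (rule exI[of _ "FLt 0 1"], intro conjI)
    show "fo_fv (FLt 0 1) \<subseteq> {..<2}" by auto
    show "lt_rel = {xs. length xs = 2 \<and> fo_sat (FLt 0 1) (\<lambda>i. if i < 2 then xs ! i else 0)}"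
      unfolding lt_rel_def
      apply (rule set_eqI)
      subgoal for xs
        apply (cases xs, simp)
        subgoal for a l by (cases l) (auto simp: length_Suc_conv)
        done
      done
  qed
  moreover have "\<forall>x. (\<forall>z. z < 1 \<longrightarrow> [x, x + z] \<notin> lt_rel) \<and> (\<forall>z. z \<ge> 1 \<longrightarrow> [x, x + z] \<in> lt_rel)"
    unfolding lt_rel_def by auto
  ultimately have "one_sided_infinite lt_rel"
    unfolding one_sided_infinite_def by (intro conjI exI[of _ 1]) auto
  with L show "\<exists>R. one_sided_infinite R \<and> pp_definable \<Gamma> 2 R" by blast
next
  assume "\<exists>R. one_sided_infinite R \<and> pp_definable \<Gamma> 2 R"
  then obtain R where "one_sided_infinite R" "pp_definable \<Gamma> 2 R" by blast
  from DD_to[OF DD_lt_from_R[OF assms(2) this]]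
  show "pp_definable \<Gamma> 2 lt_rel" unfolding lt_rel_def .
qed

end
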